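(* Let $\mathcal{H}$ be an infinite-dimensional separable real or complex Hilbert space and let $A$ be a positive bounded operator on $\mathcal{H}$ with $\|A\|_{ess}>1$. Then $A$ has a projection decomposition.
   Context: For a bounded operator $B$ on $\mathcal{H}$, the essential norm is $\|B\|_{ess}=\inf\{\|B-K\| : K \text{ compact operator on } \mathcal{H}\}$. A positive operator $A$ has a projection decomposition if $A$ can be written as the sum of a finite or infinite sequence of (not necessarily mutually orthogonal) self-adjoint (orthogonal) projections, with the series converging in the strong operator topology. $A$ is not assumed invertible. *)

theory Defs
  imports "HOL-Analysis.Analysis"
begin

text \<open>Hilbert spaces are modelled as types of class real_inner + complete_space
  (real Hilbert spaces). A complex Hilbert space is modelled as its underlying real
  Hilbert space (real part of the inner product) together with the multiplication
  by the imaginary unit, an operator J with J J = -1 that preserves the inner product.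
  A scalar structure J is either the identity (real case) or such a complex structure;
  "J-linear" operators (those commuting with J) are then exactly the operators that are
  linear over the scalar field.\<close>

definition complex_structure :: "('a::real_inner \<Rightarrow>\<^sub>L 'a) \<Rightarrow> bool" where
  "complex_structure J \<longleftrightarrow>
     (\<forall>x. J (J x) = - x) \<and> (\<forall>x y. inner (J x) (J y) = inner x y)"

definition scalar_structure :: "('a::real_inner \<Rightarrow>\<^sub>L 'a) \<Rightarrow> bool" where
  "scalar_structure J \<longleftrightarrow> J = id_blinfun \<or> complex_structure J"

definition J_linear :: "('a::real_normed_vector \<Rightarrow>\<^sub>L 'a) \<Rightarrow> ('a \<Rightarrow>\<^sub>L 'a) \<Rightarrow> bool" where
  "J_linear J T \<longleftrightarrow> (\<forall>x. T (J x) = J (T x))"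

definition infinite_dimensional :: "'a::real_vector itself \<Rightarrow> bool" where
  "infinite_dimensional _ \<longleftrightarrow> (\<forall>B::'a set. finite B \<longrightarrow> span B \<noteq> UNIV)"

definition self_adjoint :: "('a::real_inner \<Rightarrow>\<^sub>L 'a) \<Rightarrow> bool" where
  "self_adjoint T \<longleftrightarrow> (\<forall>x y. inner (T x) y = inner x (T y))"

definition positive_op :: "('a::real_inner \<Rightarrow>\<^sub>L 'a) \<Rightarrow> bool" where
  "positive_op T \<longleftrightarrow> self_adjoint T \<and> (\<forall>x. 0 \<le> inner (T x) x)"

definition projection_op :: "('a::real_inner \<Rightarrow>\<^sub>L 'a) \<Rightarrow> bool" where
  "projection_op P \<longleftrightarrow> self_adjoint P \<and> (\<forall>x. P (P x) = P x)"

definition compact_op :: "('a::real_normed_vector \<Rightarrow>\<^sub>L 'a) \<Rightarrow> bool" where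
  "compact_op K \<longleftrightarrow> compact (closure (blinfun_apply K ` cball 0 1))"

definition ess_norm :: "('a::real_normed_vector \<Rightarrow>\<^sub>L 'a) \<Rightarrow> ('a \<Rightarrow>\<^sub>L 'a) \<Rightarrow> real" where
  "ess_norm J B = Inf {norm (B - K) | K. compact_op K \<and> J_linear J K}"

text \<open>Projection decomposition: A is the sum of a finite or infinite sequence of
  projections (indexed by a set I of naturals, finite or infinite, in increasing order),
  the series converging in the strong operator topology.\<close>
definition has_projection_decomposition ::
  "('a::real_inner \<Rightarrow>\<^sub>L 'a) \<Rightarrow> ('a \<Rightarrow>\<^sub>L 'a) \<Rightarrow> bool" where
  "has_projection_decomposition J A \<longleftrightarrow>
     (\<exists>(I::nat set) (P::nat \<Rightarrow> ('a \<Rightarrow>\<^sub>L 'a)).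
        (\<forall>i\<in>I. projection_op (P i) \<and> J_linear J (P i)) \<and>
        (\<forall>x. (\<lambda>n. \<Sum>i\<in>I \<inter> {..<n}. P i x) \<longlonglongrightarrow> A x))"

end

theory Submission
  imports Defs
begin


lemma pos_cs:
  assumes "positive_op T"
  shows "(inner (T x) y)^2 \<le> inner (T x) x * inner (T y) y"
proof -
  have sa: "\<And>a b. inner (T a) b = inner a (T b)" and ps: "\<And>a. 0 \<le> inner (T a) a"
    using assms by (auto simp: positive_op_def self_adjoint_def)
  have sym: "inner (T y) x = inner (T x) y"
    by (metis sa inner_commute)
  have quad: "0 \<le> inner (T x) x + 2 * t * inner (T x) y + t^2 * inner (T y) y" for t :: real
  proof -
    have "0 \<le> inner (T (x + t *\<^sub>R y)) (x + t *\<^sub>R y)" by (rule ps)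
    also have "\<dots> = inner (T x) x + 2 * t * inner (T x) y + t^2 * inner (T y) y"
      by (simp add: blinfun.add_right blinfun.scaleR_right inner_add_left inner_add_right sym power2_eq_square algebra_simps)
    finally show ?thesis .
  qed
  show ?thesis
  proof (cases "inner (T y) y = 0")
    case True
    have "inner (T x) y = 0"
    proof (rule ccontr)
      assume ne: "inner (T x) y \<noteq> 0"
      define t where "t = - (inner (T x) x + 1) / (2 * inner (T x) y)"
      have "2 * t * inner (T x) y = - (inner (T x) x + 1)" using ne by (simp add: t_def)
      with quad[of t] True show False by simp
    qed
    then show ?thesis using True by simp
  next
    case False
    then have pos: "inner (T y) y > 0" using ps[of y] by simp
    define t where "t = - inner (T x) y / inner (T y) y"
    have "0 \<le> inner (T x) x + 2 * t * inner (T x) y + t^2 * inner (T y) y" by (rule quad)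
    also have "\<dots> = inner (T x) x - (inner (T x) y)^2 / inner (T y) y"
      using pos by (simp add: t_def field_simps power2_eq_square)
    finally have "(inner (T x) y)^2 / inner (T y) y \<le> inner (T x) x" by simp
    then show ?thesis using pos by (simp add: field_simps)
  qed
qed

lemma pos_norm_sq:
  assumes "positive_op T" and M: "\<And>z. inner (T z) z \<le> M * (norm z)^2"
  shows "(norm (T x))^2 \<le> M * inner (T x) x"
proof -
  have ps: "\<And>a. 0 \<le> inner (T a) a" using assms by (auto simp: positive_op_def)
  have "(norm (T x))^2 = inner (T x) (T x)" by (simp add: power2_norm_eq_inner)
  then have "((norm (T x))^2)^2 \<le> inner (T x) x * inner (T (T x)) (T x)"
    using pos_cs[OF assms(1), of x "T x"] by simp
  also have "\<dots> \<le> inner (T x) x * (M * (norm (T x))^2)"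
    by (rule mult_left_mono[OF M ps])
  finally have h: "((norm (T x))^2)^2 \<le> (M * inner (T x) x) * (norm (T x))^2"
    by (simp add: algebra_simps)
  show ?thesis
  proof (cases "norm (T x) = 0")
    case True
    have "0 \<le> M * inner (T x) x"
    proof (cases "x = 0")
      case True then show ?thesis by simp
    next
      case False
      have "0 \<le> M * (norm x)^2" using ps[of x] M[of x] by linarith
      then have "0 \<le> M" using False by (simp add: zero_le_mult_iff)
      then show ?thesis using ps[of x] by simp
    qed
    then show ?thesis using True by simp
  next
    case False
    then have "(norm (T x))^2 > 0" by simp
    then show ?thesis using h
      by (metis mult_le_cancel_right_pos power2_eq_square)
  qed
qed

lemma pos_norm_le:
  assumes "positive_op T" and M: "\<And>z. inner (T z) z \<le> M * (norm z)^2" and "0 \<le> M"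
  shows "norm T \<le> M"
proof (rule norm_blinfun_bound[OF assms(3)])
  fix x
  have "(norm (T x))^2 \<le> M * inner (T x) x" by (rule pos_norm_sq[OF assms(1) M])
  also have "\<dots> \<le> M * (M * (norm x)^2)" by (rule mult_left_mono[OF M assms(3)])
  also have "M * (M * (norm x)^2) = (M * norm x)^2" by (simp add: power2_eq_square)
  finally have "(norm (T x))^2 \<le> (M * norm x)^2" .
  then show "norm (T x) \<le> M * norm x"
    using assms(3) by (meson norm_ge_zero power2_le_imp_le zero_le_mult_iff)
qed

lemma quad_le_norm:
  fixes T :: "'a::real_inner \<Rightarrow>\<^sub>L 'a"
  shows "inner (T z) z \<le> norm T * (norm z)^2"
proof -
  have "inner (T z) z \<le> norm (T z) * norm z" by (rule norm_cauchy_schwarz)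
  also have "\<dots> \<le> norm T * norm z * norm z" by (simp add: mult_right_mono norm_blinfun)
  finally show ?thesis by (simp add: power2_eq_square mult.assoc)
qed

lemma pos_two:
  assumes "positive_op T"
  shows "inner (T (a + b)) (a + b) \<le> 2 * inner (T a) a + 2 * inner (T b) b"
proof -
  have sa: "\<And>a b. inner (T a) b = inner a (T b)" and ps: "\<And>a. 0 \<le> inner (T a) a"
    using assms by (auto simp: positive_op_def self_adjoint_def)
  have sym: "inner (T b) a = inner (T a) b" by (metis sa inner_commute)
  have "0 \<le> inner (T (a - b)) (a - b)" by (rule ps)
  then show ?thesis
    by (simp add: blinfun.add_right blinfun.diff_right inner_add_left inner_add_right
        inner_diff_left inner_diff_right sym)
qed



definition orthonormal :: "'a::real_inner set \<Rightarrow> bool" where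
  "orthonormal E \<longleftrightarrow> finite E \<and> (\<forall>e\<in>E. norm e = 1) \<and> (\<forall>e\<in>E. \<forall>f\<in>E. e \<noteq> f \<longrightarrow> inner e f = 0)"

definition projf :: "'a::real_inner set \<Rightarrow> 'a \<Rightarrow> 'a" where
  "projf E x = (\<Sum>e\<in>E. inner x e *\<^sub>R e)"

lemma projf_bl: "bounded_linear (projf E)"
  unfolding projf_def
  by (intro bounded_linear_sum bounded_linear_scaleR_const bounded_linear_inner_left)

lemma projf_inner_e:
  assumes "orthonormal E" "e \<in> E"
  shows "inner (projf E x) e = inner x e"
proof -
  have "inner (projf E x) e = (\<Sum>f\<in>E. inner x f * inner f e)"
    by (simp add: projf_def inner_sum_left)
  also have "\<dots> = (\<Sum>f\<in>E. if f = e then inner x e else 0)"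
  proof (rule sum.cong[OF refl])
    fix f assume "f \<in> E"
    show "inner x f * inner f e = (if f = e then inner x e else 0)"
      using assms \<open>f \<in> E\<close> by (auto simp: orthonormal_def norm_eq_1)
  qed
  also have "\<dots> = inner x e" using assms by (simp add: orthonormal_def)
  finally show ?thesis .
qed

lemma orth_span:
  assumes "w \<in> span E" "\<And>e. e \<in> E \<Longrightarrow> inner d e = 0"
  shows "inner d w = 0"
proof -
  have "subspace {w. inner d w = 0}"
    by (auto simp: subspace_def inner_add_right)
  then show ?thesis using assms span_induct[of w E "\<lambda>w. inner d w = 0"] by auto
qed

lemma projf_orth:
  assumes "orthonormal E" "w \<in> span E"
  shows "inner (x - projf E x) w = 0"
  by (rule orth_span[OF assms(2)]) (simp add: inner_diff_left projf_inner_e[OF assms(1)])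

lemma projf_span: "projf E x \<in> span E"
  unfolding projf_def by (intro span_sum span_scale span_base)

lemma projf_unique:
  assumes "orthonormal E" "p \<in> span E" "\<And>e. e \<in> E \<Longrightarrow> inner (x - p) e = 0"
  shows "p = projf E x"
proof -
  define d where "d = p - projf E x"
  have "d \<in> span E" unfolding d_def by (intro span_diff assms(2) projf_span)
  have "inner d e = 0" if "e \<in> E" for e
  proof -
    have "d = (x - projf E x) - (x - p)" by (simp add: d_def)
    then show ?thesis using assms(3)[OF that] projf_orth[OF assms(1) span_base[OF that], of x]
      by (simp add: inner_diff_left)
  qed
  then have "inner d d = 0" using orth_span[OF \<open>d \<in> span E\<close>] by blast
  then show ?thesis by (simp add: d_def)
qed

lemma projf_sa:
  shows "inner (projf E x) y = inner x (projf E y)"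
  by (simp add: projf_def inner_sum_left inner_sum_right mult.commute inner_commute)

lemma projf_idem:
  assumes "orthonormal E"
  shows "projf E (projf E x) = projf E x"
  by (rule sym, rule projf_unique[OF assms projf_span]) simp

lemma projf_quad:
  shows "inner (projf E x) x = (\<Sum>e\<in>E. (inner x e)^2)"
  unfolding projf_def inner_sum_left inner_scaleR_left power2_eq_square by (simp add: inner_commute)

lemma projf_J:
  assumes "orthonormal E" "bounded_linear J" "\<And>e. e \<in> E \<Longrightarrow> J e \<in> span E"
    and adj: "\<And>a b. \<bar>inner (J a) b\<bar> = \<bar>inner a (J b)\<bar>"
  shows "projf E (J x) = J (projf E x)"
proof -
  have lin: "linear J" using assms(2) bounded_linear.linear by blast
  have "J ` span E = span (J ` E)" using lin by (simp add: span_linear_image)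
  also have "\<dots> \<subseteq> span E" using assms(3) by (meson image_subsetI span_minimal span_span subspace_span)
  finally have sub: "J ` span E \<subseteq> span E" .
  have "J (projf E x) \<in> span E" using sub projf_span by blast
  moreover have "inner (J x - J (projf E x)) e = 0" if "e \<in> E" for e
  proof -
    have "J x - J (projf E x) = J (x - projf E x)" by (simp add: linear_diff[OF lin])
    then have "\<bar>inner (J x - J (projf E x)) e\<bar> = \<bar>inner (x - projf E x) (J e)\<bar>" using adj by simp
    also have "\<dots> = 0" using projf_orth[OF assms(1) assms(3)[OF that]] by simp
    finally show ?thesis by simp
  qed
  ultimately show ?thesis using projf_unique[OF assms(1)] by metis
qed

definition projL :: "'a::real_inner set \<Rightarrow> ('a \<Rightarrow>\<^sub>L 'a)" where
  "projL E = Blinfun (projf E)"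

lemma projL_apply[simp]: "blinfun_apply (projL E) = projf E"
  unfolding projL_def by (rule bounded_linear_Blinfun_apply[OF projf_bl])

lemma projL_proj:
  assumes "orthonormal E"
  shows "projection_op (projL E)"
  using assms by (simp add: projection_op_def self_adjoint_def projf_sa projf_idem)



lemma span_eq_by_sub:
  assumes "A \<subseteq> span B" "B \<subseteq> span A"
  shows "span A = span B"
  using assms by (metis span_mono span_span subset_antisym)

lemma gram_schmidt:
  fixes Z :: "'a::real_inner set"
  assumes "finite Z"
  shows "\<exists>E. orthonormal E \<and> span E = span Z"
  using assms
proof (induction Z rule: finite_induct)
  case empty
  then show ?case by (rule_tac x="{}" in exI) (simp add: orthonormal_def)
next
  case (insert a Z)
  then obtain E where E: "orthonormal E" "span E = span Z" by blast
  have spZ: "span (insert a Z) = span (insert a E)"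
    using E(2) by (simp add: span_insert)
  define a' where "a' = a - projf E a"
  show ?case
  proof (cases "a' = 0")
    case True
    then have "a \<in> span E" using projf_span[of E a] by (simp add: a'_def)
    then have "span (insert a E) = span E" by (rule span_redundant)
    then show ?thesis using spZ E by auto
  next
    case False
    define e' where "e' = a' /\<^sub>R norm a'"
    have ne: "norm e' = 1" using False by (simp add: e'_def)
    have orth: "inner e' e = 0" if "e \<in> E" for e
      using projf_orth[OF E(1) span_base[OF that], of a] by (simp add: e'_def a'_def)
    have on: "orthonormal (insert e' E)"
      using E(1) ne orth by (auto simp: orthonormal_def inner_commute)
    have "span (insert a E) = span (insert a' E)"
      by (rule eq_span_insert_eq) (simp add: a'_def projf_span)
    also have "\<dots> = span (insert e' E)"
    proof (rule span_eq_by_sub)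
      have "a' = norm a' *\<^sub>R e'" using False by (simp add: e'_def)
      then have "a' \<in> span (insert e' E)" by (metis span_base span_scale insertI1)
      then show "insert a' E \<subseteq> span (insert e' E)" by (auto intro: span_base)
      have "e' \<in> span (insert a' E)" unfolding e'_def by (intro span_scale span_base) simp
      then show "insert e' E \<subseteq> span (insert a' E)" by (auto intro: span_base)
    qed
    finally show ?thesis using on spZ by metis
  qed
qed


fun box :: "'a::real_normed_vector list \<Rightarrow> real \<Rightarrow> 'a set" where
  "box [] M = {0}"
| "box (e # L) M = {a + b | a b. a \<in> (\<lambda>t. t *\<^sub>R e) ` {-M..M} \<and> b \<in> box L M}"

lemma box_compact: "compact (box L M)"
proof (induction L)
  case Nil then show ?case by simp
next
  case (Cons e L)
  have "compact ((\<lambda>t. t *\<^sub>R e) ` {-M..M})"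
    by (intro compact_continuous_image continuous_intros) simp
  then show ?case using Cons by (simp add: compact_sums)
qed

lemma box_mem:
  assumes "\<And>e. e \<in> set L \<Longrightarrow> \<bar>c e\<bar> \<le> M"
  shows "(\<Sum>e\<leftarrow>L. c e *\<^sub>R e) \<in> box L M"
  using assms
proof (induction L)
  case Nil then show ?case by simp
next
  case (Cons e L)
  have "c e \<in> {-M..M}" using Cons.prems[of e] by auto
  then have "c e *\<^sub>R e \<in> (\<lambda>t. t *\<^sub>R e) ` {-M..M}" by blast
  moreover have "(\<Sum>e\<leftarrow>L. c e *\<^sub>R e) \<in> box L M" using Cons by auto
  ultimately show ?case by auto
qed


lemma finite_rank_compact:
  fixes T :: "'a::real_inner \<Rightarrow>\<^sub>L 'a"
  assumes "finite B" "\<And>x. T x \<in> span B"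
  shows "compact_op T"
proof -
  obtain E where E: "orthonormal E" "span E = span B" using gram_schmidt[OF assms(1)] by blast
  obtain L where L: "set L = E" "distinct L" using E(1) finite_distinct_list orthonormal_def by blast
  have sub: "T ` cball 0 1 \<subseteq> box L (norm T)"
  proof
    fix z assume "z \<in> T ` cball 0 1"
    then obtain x where x: "norm x \<le> 1" "z = T x" by auto
    have "z \<in> span E" using x(2) assms(2) E(2) by simp
    then have "z = projf E z" by (intro projf_unique[OF E(1)]) auto
    also have "\<dots> = (\<Sum>e\<leftarrow>L. inner z e *\<^sub>R e)"
      unfolding projf_def using sum_list_distinct_conv_sum_set[OF L(2), of "\<lambda>e. inner z e *\<^sub>R e"] L(1) by simp
    also have "\<dots> \<in> box L (norm T)"
    proof (rule box_mem)
      fix e assume "e \<in> set L"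
      then have "norm e = 1" using L E(1) by (auto simp: orthonormal_def)
      have "\<bar>inner z e\<bar> \<le> norm z * norm e" by (rule Cauchy_Schwarz_ineq2)
      also have "\<dots> \<le> norm T * norm x" using \<open>norm e = 1\<close> x(2) by (simp add: norm_blinfun)
      also have "\<dots> \<le> norm T" using x(1) by (simp add: mult_left_le)
      finally show "\<bar>inner z e\<bar> \<le> norm T" .
    qed
    finally show "z \<in> box L (norm T)" .
  qed
  have "closure (T ` cball 0 1) \<subseteq> box L (norm T)"
    by (rule closure_minimal[OF sub compact_imp_closed[OF box_compact]])
  then have eq: "closure (T ` cball 0 1) \<inter> box L (norm T) = closure (T ` cball 0 1)" by blast
  have "compact (closure (T ` cball 0 1) \<inter> box L (norm T))"
    by (rule closed_Int_compact) (simp_all add: box_compact)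
  then show ?thesis unfolding compact_op_def eq .
qed


lemma compact_op_add:
  assumes "compact_op K1" "compact_op K2"
  shows "compact_op (K1 + K2)"
proof -
  let ?S1 = "closure (K1 ` cball 0 1)" and ?S2 = "closure (K2 ` cball 0 1)"
  have c: "compact {a + b | a b. a \<in> ?S1 \<and> b \<in> ?S2}"
    using assms by (intro compact_sums) (auto simp: compact_op_def)
  have "(K1 + K2) ` cball 0 1 \<subseteq> {a + b | a b. a \<in> ?S1 \<and> b \<in> ?S2}"
  proof
    fix z assume "z \<in> (K1 + K2) ` cball 0 1"
    then obtain x where x: "x \<in> cball 0 1" "z = K1 x + K2 x" by (auto simp: blinfun.add_left)
    have "K1 x \<in> ?S1" by (rule subsetD[OF closure_subset imageI[OF x(1)]])
    moreover have "K2 x \<in> ?S2" by (rule subsetD[OF closure_subset imageI[OF x(1)]])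
    ultimately show "z \<in> {a + b | a b. a \<in> ?S1 \<and> b \<in> ?S2}" using x(2) by blast
  qed
  then have "closure ((K1 + K2) ` cball 0 1) \<subseteq> {a + b | a b. a \<in> ?S1 \<and> b \<in> ?S2}"
    by (rule closure_minimal[OF _ compact_imp_closed[OF c]])
  then have eq: "closure ((K1 + K2) ` cball 0 1) \<inter> {a + b | a b. a \<in> ?S1 \<and> b \<in> ?S2} = closure ((K1 + K2) ` cball 0 1)" by (rule Int_absorb2)
  have "compact (closure ((K1 + K2) ` cball 0 1) \<inter> {a + b | a b. a \<in> ?S1 \<and> b \<in> ?S2})"
    by (rule closed_Int_compact) (simp_all add: c)
  then show ?thesis unfolding compact_op_def eq .
qed

lemma compact_op_zero: "compact_op (0 :: 'a::real_inner \<Rightarrow>\<^sub>L 'a)"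
  by (rule finite_rank_compact[of "{}"]) auto



lemma J_facts:
  fixes J :: "'a::real_inner \<Rightarrow>\<^sub>L 'a"
  assumes "scalar_structure J"
  shows J_adj: "\<And>a b. \<bar>inner (J a) b\<bar> = \<bar>inner a (J b)\<bar>"
    and J_JJ: "\<And>x. J (J x) = x \<or> J (J x) = - x"
    and J_iso: "\<And>x y. inner (J x) (J y) = inner x y"
proof -
  show "\<bar>inner (J a) b\<bar> = \<bar>inner a (J b)\<bar>" for a b
  proof (cases "J = id_blinfun")
    case True then show ?thesis by simp
  next
    case False
    then have cs: "complex_structure J" using assms by (simp add: scalar_structure_def)
    have iso: "\<forall>x y. inner (J x) (J y) = inner x y" using cs by (simp add: complex_structure_def)
    have "inner (J a) b = inner (J (J a)) (J b)" using iso by metis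
    also have "\<dots> = - inner a (J b)"
    proof -
      have "J (J a) = - a" using cs by (simp add: complex_structure_def)
      then show ?thesis by simp
    qed
    finally show ?thesis by simp
  qed
  show "J (J x) = x \<or> J (J x) = - x" for x
    using assms by (auto simp: scalar_structure_def complex_structure_def)
  show "inner (J x) (J y) = inner x y" for x y
    using assms by (auto simp: scalar_structure_def complex_structure_def)
qed

lemma J_span:
  fixes J :: "'a::real_inner \<Rightarrow>\<^sub>L 'a"
  assumes "\<And>z. z \<in> Z \<Longrightarrow> J z \<in> span Z" "w \<in> span Z"
  shows "J w \<in> span Z"
proof -
  have lin: "linear (blinfun_apply J)" by (simp add: blinfun.bounded_linear_right bounded_linear.linear)
  have "J ` span Z = span (J ` Z)" using lin by (simp add: span_linear_image)
  also have "\<dots> \<subseteq> span Z" using assms(1) by (meson image_subsetI span_minimal span_span subspace_span)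
  finally show ?thesis using assms(2) by blast
qed

lemma find_y:
  fixes R J :: "'a::real_inner \<Rightarrow>\<^sub>L 'a"
  assumes J: "scalar_structure J" and Rpos: "positive_op R" and RJ: "J_linear J R"
    and margin: "\<And>K. compact_op K \<Longrightarrow> J_linear J K \<Longrightarrow> c \<le> norm (R - K)"
    and cc: "c' < c" "0 \<le> c'"
    and Z: "finite Z" "\<And>z. z \<in> Z \<Longrightarrow> J z \<in> span Z"
  shows "\<exists>y. norm y = 1 \<and> (\<forall>z\<in>Z. inner y z = 0) \<and> c' \<le> inner (R y) y"
proof (rule ccontr)
  assume "\<not> ?thesis"
  then have H: "\<And>y. norm y = 1 \<Longrightarrow> (\<forall>z\<in>Z. inner y z = 0) \<Longrightarrow> inner (R y) y < c'"
    by (meson not_le)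
  obtain E where E: "orthonormal E" "span E = span Z" using gram_schmidt[OF Z(1)] by blast
  have finE: "finite E" using E(1) by (simp add: orthonormal_def)
  define P where "P = projL E"
  have Papp: "\<And>x. P x = projf E x" by (simp add: P_def)
  have JE: "J e \<in> span E" if "e \<in> E" for e
    using J_span[of Z J e] Z(2) E(2) span_base[OF that] by simp
  have PJ: "\<And>x. P (J x) = J (P x)"
    unfolding Papp by (rule projf_J[OF E(1) blinfun.bounded_linear_right JE J_adj[OF J]])
  have RJ': "\<And>x. R (J x) = J (R x)" using RJ by (simp add: J_linear_def)
  define K where "K = (P o\<^sub>L R) + (R o\<^sub>L P) - (P o\<^sub>L R o\<^sub>L P)"
  have Kapp: "K x = P (R x) + R (P x) - P (R (P x))" for x
    by (simp add: K_def blinfun.add_left blinfun.diff_left)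
  have KJ: "J_linear J K"
    unfolding J_linear_def Kapp by (simp add: PJ RJ' blinfun.add_right blinfun.diff_right)
  have Kc: "compact_op K"
  proof (rule finite_rank_compact[of "E \<union> R ` E"])
    show "finite (E \<union> R ` E)" using finE by simp
    fix x
    have s1: "P y \<in> span (E \<union> R ` E)" for y
      using projf_span[of E y] span_mono[of E "E \<union> R ` E"] by (auto simp: Papp)
    have lin: "linear (blinfun_apply R)" by (simp add: blinfun.bounded_linear_right bounded_linear.linear)
    have "R (P x) \<in> R ` span E" unfolding Papp by (rule imageI[OF projf_span])
    also have "\<dots> = span (R ` E)" using lin by (simp add: span_linear_image)
    also have "\<dots> \<subseteq> span (E \<union> R ` E)" by (rule span_mono) blast
    finally have s2: "R (P x) \<in> span (E \<union> R ` E)" .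
    show "K x \<in> span (E \<union> R ` E)" unfolding Kapp by (intro span_add span_diff s1 s2)
  qed
  define Q where "Q x = x - P x" for x
  have Qsa: "inner (Q x) y = inner x (Q y)" for x y
    by (simp add: Q_def inner_diff_left inner_diff_right Papp projf_sa)
  have Tapp: "(R - K) x = Q (R (Q x))" for x
    by (simp add: Q_def Kapp blinfun.diff_left blinfun.diff_right algebra_simps)
  have Rsa: "inner (R a) b = inner a (R b)" for a b using Rpos by (simp add: positive_op_def self_adjoint_def)
  have Rps: "0 \<le> inner (R a) a" for a using Rpos by (simp add: positive_op_def)
  have Tquad: "inner ((R - K) x) x = inner (R (Q x)) (Q x)" for x
    by (simp add: Tapp Qsa)
  have Tpos: "positive_op (R - K)"
    unfolding positive_op_def self_adjoint_def
    by (simp add: Tquad Rps) (simp add: Tapp Qsa Rsa)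
  have Qorth: "inner (Q x) z = 0" if "z \<in> Z" for x z
    using projf_orth[OF E(1), of z x] E(2) span_base[OF that] by (simp add: Q_def Papp)
  have Qnorm: "(norm (Q x))^2 \<le> (norm x)^2" for x
  proof -
    have "inner (Q x) (P x) = 0"
      using projf_orth[OF E(1) projf_span] by (simp add: Q_def Papp)
    moreover have "x = Q x + P x" by (simp add: Q_def)
    ultimately have "(norm x)^2 = (norm (Q x))^2 + (norm (P x))^2"
      by (metis norm_add_Pythagorean orthogonal_def)
    then show ?thesis by simp
  qed
  have bound: "inner ((R - K) x) x \<le> c' * (norm x)^2" for x
  proof (cases "Q x = 0")
    case True then show ?thesis using cc by (simp add: Tquad)
  next
    case False
    define y where "y = Q x /\<^sub>R norm (Q x)"
    have "norm y = 1" using False by (simp add: y_def)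
    moreover have "\<forall>z\<in>Z. inner y z = 0" using Qorth by (simp add: y_def)
    ultimately have "inner (R y) y < c'" by (rule H)
    moreover have "inner (R y) y = inner (R (Q x)) (Q x) / (norm (Q x))^2"
      using False by (simp add: y_def blinfun.scaleR_right power2_eq_square field_simps)
    ultimately have "inner (R (Q x)) (Q x) \<le> c' * (norm (Q x))^2"
      using False by (simp add: field_simps)
    also have "\<dots> \<le> c' * (norm x)^2" using Qnorm cc(2) by (simp add: mult_left_mono)
    finally show ?thesis by (simp add: Tquad)
  qed
  have "norm (R - K) \<le> c'" by (rule pos_norm_le[OF Tpos bound cc(2)])
  moreover have "c \<le> norm (R - K)" by (rule margin[OF Kc KJ])
  ultimately show False using cc by simp
qed



lemma core:
  fixes R J :: "'a::real_inner \<Rightarrow>\<^sub>L 'a"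
  assumes J: "scalar_structure J" and Rpos: "positive_op R" and RJ: "J_linear J R"
    and margin: "\<And>K. compact_op K \<Longrightarrow> J_linear J K \<Longrightarrow> c \<le> norm (R - K)"
    and c1: "1 < c"
    and M: "\<And>z. norm (R z) \<le> M * norm z"
    and q: "0 < inner (R x) x"
  shows "\<exists>P. projection_op P \<and> J_linear J P \<and> compact_op P \<and> positive_op (R - P) \<and>
          (inner (R x) x)^2 \<le> inner (P x) x * (M^2 * ((norm x)^2 + inner (R x) x / ((c - 1) / 2)))"
proof -
  define qq where "qq = inner (R x) x"
  define \<eta> where "\<eta> = (c - 1) / 2"
  have eta: "0 < \<eta>" using c1 by (simp add: \<eta>_def)
  have Rsa: "inner (R a) b = inner a (R b)" for a b using Rpos by (simp add: positive_op_def self_adjoint_def)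
  have Rps: "0 \<le> inner (R a) a" for a using Rpos by (simp add: positive_op_def)
  have RJ': "R (J a) = J (R a)" for a using RJ by (simp add: J_linear_def)
  define Z where "Z = {R x, R (R x), J (R x), J (R (R x))}"
  have Zspan: "J z \<in> span Z" if "z \<in> Z" for z
  proof -
    have jj: "J (J w) \<in> span Z" if "w \<in> Z" for w
      using J_JJ[OF J, of w] span_base[OF that] span_neg[OF span_base[OF that]] by metis
    show ?thesis using that unfolding Z_def
      by (auto intro: span_base jj[unfolded Z_def])
  qed
  have lt: "1 + \<eta> < c" using c1 unfolding \<eta>_def by (simp add: field_simps)
  have nn: "0 \<le> 1 + \<eta>" using eta by linarith
  have fZ: "finite Z" by (simp add: Z_def)
  obtain y where y: "norm y = 1" "\<forall>z\<in>Z. inner y z = 0" "1 + \<eta> \<le> inner (R y) y"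
    using find_y[OF J Rpos RJ margin lt nn fZ Zspan] by blast
  have o1: "inner y (R x) = 0" and o2: "inner y (R (R x)) = 0" using y(2) by (auto simp: Z_def)
  define r where "r = inner (R y) y"
  define t where "t = sqrt (qq / \<eta>)"
  have t2: "t^2 = qq / \<eta>" using q eta by (simp add: t_def qq_def)
  define v where "v = x + t *\<^sub>R y"
  have Rv: "R v = R x + t *\<^sub>R R y" by (simp add: v_def blinfun.add_right blinfun.scaleR_right)
  have Rxv: "inner (R x) v = qq"
    using o1 by (simp add: v_def qq_def inner_add_right inner_commute)
  have Rvv: "inner (R v) v = qq + t^2 * r"
  proof -
    have "inner (R y) x = 0" using o1 Rsa[of y x] by simp
    then show ?thesis using o1 unfolding Rv unfolding v_def
      by (simp add: qq_def r_def inner_add_left inner_add_right inner_commute power2_eq_square)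
  qed
  have RxRy: "inner (R x) (R y) = 0" using o2 Rsa[of "R x" y] by (simp add: inner_commute)
  have Rvn: "(norm (R v))^2 = (norm (R x))^2 + t^2 * (norm (R y))^2"
    using RxRy unfolding Rv power2_norm_eq_inner
    by (simp add: inner_add_left inner_add_right inner_commute power2_eq_square)
  have ry: "r^2 \<le> (norm (R y))^2"
  proof -
    have "\<bar>r\<bar> \<le> norm (R y) * norm y" unfolding r_def by (rule Cauchy_Schwarz_ineq2)
    then have "\<bar>r\<bar>^2 \<le> (norm (R y))^2" using y(1) by (intro power_mono) auto
    then show ?thesis by simp
  qed
  have r1: "1 + \<eta> \<le> r" using y(3) by (simp add: r_def)
  have gap: "\<eta> \<le> (norm (R y))^2 - r"
  proof -
    have "r * (r - 1) \<ge> 1 * (r - 1)" using r1 eta by (intro mult_right_mono) auto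
    then show ?thesis using ry r1 by (simp add: power2_eq_square algebra_simps)
  qed
  have vcond: "inner (R v) v \<le> (norm (R v))^2"
  proof -
    have "qq = t^2 * \<eta>" using t2 eta by simp
    also have "\<dots> \<le> t^2 * ((norm (R y))^2 - r)" by (rule mult_left_mono[OF gap]) simp
    finally have "qq + t^2 * r \<le> t^2 * (norm (R y))^2" by (simp add: algebra_simps)
    moreover have "0 \<le> (norm (R x))^2" by simp
    ultimately show ?thesis using Rvn Rvv by linarith
  qed
  have Mnn: "0 \<le> M"
  proof -
    have "x \<noteq> 0" using q by auto
    then have nx: "0 < norm x" by simp
    have "0 \<le> M * norm x" using M[of x] norm_ge_zero order_trans by blast
    then show ?thesis using nx by (simp add: zero_le_mult_iff)
  qed
  have Nbound: "(norm (R v))^2 \<le> M^2 * ((norm x)^2 + qq / \<eta>)"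
  proof -
    have "(norm (R x))^2 \<le> (M * norm x)^2" using M[of x] by (simp add: power_mono)
    moreover have "(norm (R y))^2 \<le> M^2" using M[of y] y(1) by (simp add: power_mono)
    ultimately have "(norm (R x))^2 + t^2 * (norm (R y))^2 \<le> M^2 * (norm x)^2 + t^2 * M^2"
      by (intro add_mono mult_left_mono) (auto simp: power_mult_distrib)
    then show ?thesis using Rvn t2 by (simp add: algebra_simps)
  qed
  define N where "N = norm (R v)"
  have Npos: "0 < N"
  proof (rule ccontr)
    assume "\<not> 0 < N"
    then have "R v = 0" by (simp add: N_def)
    then have "inner (R x) v = 0" by (simp add: Rsa)
    then show False using Rxv q by (simp add: qq_def)
  qed
  define u where "u = R v /\<^sub>R N"
  have nu: "norm u = 1" using Npos by (simp add: u_def N_def)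
  have iso: "inner (J a) (J b) = inner a b" for a b by (rule J_iso[OF J])
  have nJu: "norm (J u) = 1" using nu iso[of u u] by (simp add: norm_eq_sqrt_inner)
  have uJu: "inner u (J u) = 0" if "J u \<noteq> u"
  proof -
    have cs: "complex_structure J" using J that by (auto simp: scalar_structure_def)
    have "inner u (J u) = inner (J u) (J (J u))" by (simp add: iso)
    also have "\<dots> = - inner (J u) u" using cs by (simp add: complex_structure_def)
    finally show ?thesis by (simp add: inner_commute)
  qed
  define E where "E = {u, J u}"
  have onE: "orthonormal E"
    using nu nJu uJu by (auto simp: orthonormal_def E_def inner_commute)
  define P where "P = projL E"
  have Papp: "P z = projf E z" for z by (simp add: P_def)
  have JE: "J e \<in> span E" if "e \<in> E" for e
  proof -
    have "J (J u) \<in> span E"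
      using J_JJ[OF J, of u] span_base[of u E] span_neg[OF span_base[of u E]] by (auto simp: E_def)
    then show ?thesis using that by (auto simp: E_def intro: span_base)
  qed
  have Pproj: "projection_op P" unfolding P_def by (rule projL_proj[OF onE])
  have PJ: "J_linear J P" unfolding J_linear_def Papp
    by (intro allI projf_J[OF onE blinfun.bounded_linear_right JE J_adj[OF J]]) auto
  have Pc: "compact_op P"
    by (rule finite_rank_compact[of E]) (auto simp: E_def Papp projf_span)
  have Psa: "inner (P a) b = inner a (P b)" for a b by (simp add: Papp projf_sa)
  have xRv: "inner x (R v) = qq" using Rxv Rsa[of x v] by simp
  have xu: "inner x u = qq / N"
    using xRv by (simp add: u_def divide_inverse mult.commute)
  have Pxx: "(qq / N)^2 \<le> inner (P x) x"
  proof -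
    have "inner (P x) x = (\<Sum>e\<in>E. (inner x e)^2)" by (simp add: Papp projf_quad)
    also have "\<dots> \<ge> (inner x u)^2"
      by (rule member_le_sum) (auto simp: E_def)
    finally show ?thesis using xu by simp
  qed
  have main: "(\<Sum>e\<in>E. (inner z e)^2) \<le> inner (R z) z" for z
  proof (cases "J u = u")
    case True
    then have "E = {u}" by (simp add: E_def)
    have zu: "inner z u = inner (R z) v / N"
      using Rsa[of z v] by (simp add: u_def divide_inverse mult.commute)
    have "(\<Sum>e\<in>E. (inner z e)^2) = (inner (R z) v)^2 / N^2"
      using \<open>E = {u}\<close> zu by (simp add: power_divide)
    also have "\<dots> \<le> inner (R z) z * inner (R v) v / N^2"
      using pos_cs[OF Rpos, of z v] by (simp add: divide_right_mono)
    also have "\<dots> \<le> inner (R z) z * N^2 / N^2"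
      using vcond Rps[of z] by (intro divide_right_mono mult_left_mono) (auto simp: N_def)
    also have "\<dots> = inner (R z) z" using Npos by simp
    finally show ?thesis .
  next
    case False
    have cs: "complex_structure J" using J False by (auto simp: scalar_structure_def)
    have JJ: "J (J w) = - w" for w using cs by (simp add: complex_structure_def)
    define a where "a = inner (R z) v"
    define b where "b = inner (R z) (J v)"
    have za: "inner z u = a / N"
      using Rsa[of z v] by (simp add: a_def u_def divide_inverse mult.commute)
    have Ju: "J u = R (J v) /\<^sub>R N" by (simp add: u_def blinfun.scaleR_right RJ')
    have zb: "inner z (J u) = b / N"
      using Rsa[of z "J v"] by (simp add: Ju b_def divide_inverse mult.commute)
    have "(\<Sum>e\<in>E. (inner z e)^2) = (inner z u)^2 + (inner z (J u))^2"
      using False by (simp add: E_def)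
    also have "\<dots> = (a^2 + b^2) / N^2" using za zb by (simp add: power_divide add_divide_distrib)
    finally have sumeq: "(\<Sum>e\<in>E. (inner z e)^2) = (a^2 + b^2) / N^2" .
    define w where "w = a *\<^sub>R v + b *\<^sub>R J v"
    have RJvJv: "inner (R (J v)) (J v) = inner (R v) v" by (simp add: RJ' iso)
    have RvJv: "inner (R v) (J v) = 0"
    proof -
      have "inner (R v) (J v) = inner (J (R v)) (J (J v))" by (simp add: iso)
      also have "\<dots> = - inner (R (J v)) v" by (simp add: JJ RJ')
      also have "\<dots> = - inner (R v) (J v)" using Rsa[of "J v" v] by (simp add: inner_commute)
      finally show ?thesis by simp
    qed
    have RJvv: "inner (R (J v)) v = 0" using RvJv Rsa[of "J v" v] by (simp add: inner_commute)
    have Rzw: "inner (R z) w = a^2 + b^2"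
      by (simp add: w_def a_def b_def inner_add_right power2_eq_square)
    have Rww: "inner (R w) w = (a^2 + b^2) * inner (R v) v"
      by (simp add: w_def blinfun.add_right blinfun.scaleR_right inner_add_left inner_add_right
          RJvJv RvJv RJvv power2_eq_square algebra_simps)
    have ab: "a^2 + b^2 \<le> inner (R z) z * inner (R v) v"
    proof (cases "a^2 + b^2 = 0")
      case True then show ?thesis using Rps[of z] Rps[of v] by simp
    next
      case False
      then have pos: "0 < a^2 + b^2" by (simp add: add_pos_nonneg less_le)
      have "(a^2 + b^2)^2 \<le> inner (R z) z * ((a^2 + b^2) * inner (R v) v)"
        using pos_cs[OF Rpos, of z w] by (simp add: Rzw Rww)
      then have "(a^2 + b^2) * (a^2 + b^2) \<le> (a^2 + b^2) * (inner (R z) z * inner (R v) v)"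
        by (simp add: power2_eq_square algebra_simps)
      then show ?thesis using pos by simp
    qed
    also have "\<dots> \<le> inner (R z) z * N^2"
      using vcond Rps[of z] by (intro mult_left_mono) (auto simp: N_def)
    finally have "(a^2 + b^2) / N^2 \<le> inner (R z) z" using Npos by (simp add: divide_le_eq)
    then show ?thesis using sumeq by simp
  qed
  have Rmpos: "positive_op (R - P)"
    unfolding positive_op_def self_adjoint_def
    using main Rsa Psa
    by (simp add: blinfun.diff_left inner_diff_left inner_diff_right Papp projf_quad)
  have fin: "qq^2 \<le> inner (P x) x * (M^2 * ((norm x)^2 + qq / \<eta>))"
  proof -
    have "qq^2 = (qq / N)^2 * N^2" using Npos by (simp add: power_divide)
    also have "\<dots> \<le> inner (P x) x * N^2" using Pxx by (simp add: mult_right_mono)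
    also have "\<dots> \<le> inner (P x) x * (M^2 * ((norm x)^2 + qq / \<eta>))"
      using Nbound Pxx by (intro mult_left_mono) (auto simp: N_def intro: order_trans[OF zero_le_power2])
    finally show ?thesis .
  qed
  show ?thesis using Pproj PJ Pc Rmpos fin by (auto simp: qq_def \<eta>_def)
qed



definition good :: "('a::real_inner \<Rightarrow>\<^sub>L 'a) \<Rightarrow> ('a \<Rightarrow>\<^sub>L 'a) \<Rightarrow> ('a \<Rightarrow>\<^sub>L 'a) \<Rightarrow> bool" where
  "good J R P \<longleftrightarrow> projection_op P \<and> J_linear J P \<and> compact_op P \<and> positive_op (R - P)"

definition stepP :: "('a::real_inner \<Rightarrow>\<^sub>L 'a) \<Rightarrow> ('a \<Rightarrow>\<^sub>L 'a) \<Rightarrow> 'a \<Rightarrow> ('a \<Rightarrow>\<^sub>L 'a)" where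
  "stepP J R x = (SOME P. good J R P \<and> Sup {inner (blinfun_apply P' x) x | P'. good J R P'} / 2 \<le> inner (P x) x)"

lemma proj_pos:
  assumes "projection_op P"
  shows "inner (P z) z = inner (P z) (P z)"
proof -
  have "inner (P z) (P z) = inner z (P (P z))" using assms by (simp add: projection_op_def self_adjoint_def)
  also have "\<dots> = inner z (P z)" using assms by (simp add: projection_op_def)
  finally show ?thesis by (simp add: inner_commute)
qed

lemma proj_nonneg:
  assumes "projection_op P"
  shows "0 \<le> inner (P z) z"
  using proj_pos[OF assms] by simp

lemma good_le:
  assumes "good J R P"
  shows "inner (P x) x \<le> inner (R x) x"
  using assms by (simp add: good_def positive_op_def blinfun.diff_left inner_diff_left)

lemma good_zero:
  assumes "positive_op R"
  shows "good J R 0"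
  using assms compact_op_zero
  by (simp add: good_def projection_op_def self_adjoint_def J_linear_def)

lemma stepP_prop:
  assumes "positive_op R"
  shows "good J R (stepP J R x)"
    and "\<And>P'. good J R P' \<Longrightarrow> inner (blinfun_apply P' x) x / 2 \<le> inner (stepP J R x x) x"
proof -
  define S where "S = {inner (blinfun_apply P' x) x | P'. good J R P'}"
  have ne: "S \<noteq> {}" using good_zero[OF assms] by (auto simp: S_def)
  have bdd: "bdd_above S" unfolding S_def bdd_above_def using good_le by blast
  have ex: "\<exists>P. good J R P \<and> Sup S / 2 \<le> inner (P x) x"
  proof (cases "Sup S \<le> 0")
    case True then show ?thesis using good_zero[OF assms] by (intro exI[of _ 0]) auto
  next
    case False
    then have "Sup S / 2 < Sup S" by simp
    then obtain s where "s \<in> S" "Sup S / 2 < s" using less_cSupE[OF _ ne] by blast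
    then show ?thesis by (auto simp: S_def)
  qed
  have st: "good J R (stepP J R x) \<and> Sup S / 2 \<le> inner (stepP J R x x) x"
    unfolding stepP_def S_def[symmetric] by (rule someI_ex[OF ex])
  then show "good J R (stepP J R x)" by simp
  fix P' assume "good J R P'"
  then have "inner (P' x) x \<le> Sup S" using bdd by (intro cSup_upper) (auto simp: S_def)
  then show "inner (blinfun_apply P' x) x / 2 \<le> inner (stepP J R x x) x" using st by simp
qed



lemma main_iter:
  fixes J A :: "'a::real_inner \<Rightarrow>\<^sub>L 'a" and d :: "nat \<Rightarrow> 'a"
  assumes J: "scalar_structure J" and AJ: "J_linear J A" and Apos: "positive_op A"
    and c1: "1 < c" and marginA: "\<And>K. compact_op K \<Longrightarrow> J_linear J K \<Longrightarrow> c \<le> norm (A - K)"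
    and dense: "\<And>x e. 0 < e \<Longrightarrow> \<exists>j. dist (d j) x < e"
  shows "has_projection_decomposition J A"
proof -
  define tgt where "tgt n = d (fst (prod_decode n))" for n
  define S where "S = rec_nat A (\<lambda>n R. R - stepP J R (tgt n))"
  define Pn where "Pn n = stepP J (S n) (tgt n)" for n
  have S0: "S 0 = A" by (simp add: S_def)
  have SSuc: "S (Suc n) = S n - Pn n" for n by (simp add: S_def Pn_def)
  define inv where "inv R \<longleftrightarrow> positive_op R \<and> J_linear J R \<and> positive_op (A - R) \<and>
      (\<forall>K. compact_op K \<and> J_linear J K \<longrightarrow> c \<le> norm (R - K))" for R
  have inv_step: "inv (R - P)" if iR: "inv R" and gP: "good J R P" for R P
  proof -
    have Pp: "projection_op P" and PJ: "J_linear J P" and Pc: "compact_op P" and RP: "positive_op (R - P)"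
      using gP by (auto simp: good_def)
    have RJ: "J_linear J R" and AR: "positive_op (A - R)" and mR: "\<And>K. compact_op K \<Longrightarrow> J_linear J K \<Longrightarrow> c \<le> norm (R - K)"
      using iR by (auto simp: inv_def)
    have "J_linear J (R - P)" using RJ PJ by (simp add: J_linear_def blinfun.diff_left blinfun.diff_right)
    moreover have "positive_op (A - (R - P))"
    proof -
      have eq: "A - (R - P) = (A - R) + P" by simp
      have "self_adjoint (A - R)" "self_adjoint P" using AR Pp by (auto simp: positive_op_def projection_op_def)
      then have "self_adjoint ((A - R) + P)"
        by (simp add: self_adjoint_def blinfun.add_left inner_add_left inner_add_right)
      moreover have "0 \<le> inner (((A - R) + P) z) z" for z
        using AR proj_nonneg[OF Pp, of z] by (simp add: positive_op_def blinfun.add_left inner_add_left)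
      ultimately show ?thesis unfolding eq positive_op_def by simp
    qed
    moreover have "c \<le> norm (R - P - K)" if "compact_op K" "J_linear J K" for K
    proof -
      have "compact_op (P + K)" by (rule compact_op_add[OF Pc that(1)])
      moreover have "J_linear J (P + K)" using PJ that(2) by (simp add: J_linear_def blinfun.add_left blinfun.add_right)
      ultimately have "c \<le> norm (R - (P + K))" by (rule mR)
      then show ?thesis by (simp add: algebra_simps)
    qed
    ultimately show ?thesis using RP by (auto simp: inv_def)
  qed
  have inv0: "inv A"
    using Apos AJ marginA by (auto simp: inv_def positive_op_def self_adjoint_def)
  have Pgood: "good J (S n) (Pn n)" and invS: "inv (S n)" for n
  proof -
    have "inv (S n) \<and> good J (S n) (Pn n)"
    proof (induction n)
      case 0
      then show ?case using inv0 stepP_prop(1)[of A J] by (simp add: S0 Pn_def inv_def)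
    next
      case (Suc n)
      then have "inv (S (Suc n))" using inv_step by (simp add: SSuc)
      then show ?case using stepP_prop(1)[of "S (Suc n)" J] by (simp add: Pn_def inv_def)
    qed
    then show "good J (S n) (Pn n)" "inv (S n)" by auto
  qed
  have Spos: "positive_op (S n)" for n using invS by (simp add: inv_def)
  define M where "M = norm A + 1"
  have Mpos: "0 < M" by (simp add: M_def add_nonneg_pos)
  have quadS: "inner (S n z) z \<le> M * (norm z)^2" for n z
  proof -
    have "0 \<le> inner ((A - S n) z) z" using invS[of n] by (simp add: inv_def positive_op_def)
    then have "inner (S n z) z \<le> inner (A z) z" by (simp add: blinfun.diff_left inner_diff_left)
    also have "\<dots> \<le> norm A * (norm z)^2" by (rule quad_le_norm)
    also have "\<dots> \<le> M * (norm z)^2" by (simp add: M_def mult_right_mono)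
    finally show ?thesis .
  qed
  have normS: "norm (S n) \<le> M" for n
    by (rule pos_norm_le[OF Spos quadS]) (use Mpos in simp)
  have Sz: "norm (S n z) \<le> M * norm z" for n z
    using norm_blinfun[of "S n" z] normS[of n] by (meson mult_right_mono norm_ge_zero order_trans)
  have dec: "inner (S (Suc n) z) z \<le> inner (S n z) z" for n z
    using proj_nonneg[of "Pn n" z] Pgood[of n]
    by (simp add: SSuc good_def blinfun.diff_left inner_diff_left)
  have decm: "inner (S n z) z \<le> inner (S m z) z" if "m \<le> n" for m n z
    using lift_Suc_antimono_le[of "\<lambda>n. inner (S n z) z", OF dec that] .
  have nonneg: "0 \<le> inner (S n z) z" for n z using Spos[of n] by (simp add: positive_op_def)
  define \<eta> where "\<eta> = (c - 1) / 2"
  have eta: "0 < \<eta>" using c1 by (simp add: \<eta>_def)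
  have small: "\<exists>n. inner (S n (d j)) (d j) < \<epsilon>" if eps: "0 < \<epsilon>" for j \<epsilon>
  proof (rule ccontr)
    assume "\<not> ?thesis"
    then have ge: "\<epsilon> \<le> inner (S n (d j)) (d j)" for n by (simp add: not_less)
    define x where "x = d j"
    define q where "q n = inner (S n x) x" for n
    have qge: "\<epsilon> \<le> q n" for n using ge by (simp add: q_def x_def)
    have "x \<noteq> 0" using qge[of 0] eps by (auto simp: q_def)
    define D where "D = M^2 * ((norm x)^2 + q 0 / \<eta>)"
    have Dpos: "0 < D" using \<open>x \<noteq> 0\<close> Mpos eta qge[of 0] eps
      by (simp add: D_def add_pos_nonneg)
    define \<delta> where "\<delta> = \<epsilon>^2 / D / 2"
    have dpos: "0 < \<delta>" using Dpos eps by (simp add: \<delta>_def)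
    have key: "q (Suc n) \<le> q n - \<delta>" if fn: "fst (prod_decode n) = j" for n
    proof -
      have tg: "tgt n = x" by (simp add: tgt_def fn x_def)
      have mS: "\<And>K. compact_op K \<Longrightarrow> J_linear J K \<Longrightarrow> c \<le> norm (S n - K)"
        using invS[of n] by (simp add: inv_def)
      have SJ: "J_linear J (S n)" using invS[of n] by (simp add: inv_def)
      have qpos: "0 < inner (S n x) x" using qge[of n] eps by (simp add: q_def)
      obtain P where P: "projection_op P" "J_linear J P" "compact_op P" "positive_op (S n - P)"
        and ineq: "(inner (S n x) x)^2 \<le> inner (P x) x * (M^2 * ((norm x)^2 + inner (S n x) x / ((c - 1) / 2)))"
        using core[OF J Spos SJ mS c1 Sz qpos] by blast
      have gP: "good J (S n) P" using P by (simp add: good_def)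
      have Pnn: "0 \<le> inner (P x) x" by (rule proj_nonneg[OF P(1)])
      have "M^2 * ((norm x)^2 + q n / \<eta>) \<le> D"
        using decm[of 0 n x] eta by (simp add: D_def q_def divide_right_mono mult_left_mono)
      then have "(q n)^2 \<le> inner (P x) x * D"
        using ineq order_trans[OF _ mult_left_mono[OF _ Pnn]] by (simp add: q_def \<eta>_def)
      moreover have "\<epsilon>^2 \<le> (q n)^2" using qge[of n] eps by (simp add: power_mono)
      ultimately have "\<epsilon>^2 / D \<le> inner (P x) x" using Dpos by (simp add: divide_le_eq)
      moreover have "inner (P x) x / 2 \<le> inner (Pn n x) x"
        using stepP_prop(2)[OF Spos gP] by (simp add: Pn_def tg)
      ultimately have "\<delta> \<le> inner (Pn n x) x" by (simp add: \<delta>_def)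
      then show ?thesis by (simp add: q_def SSuc blinfun.diff_left inner_diff_left)
    qed
    have qdec: "q n' \<le> q m" if "m \<le> n'" for m n' using decm[OF that] by (simp add: q_def)
    have mono_enc: "Suc (prod_encode (j, k)) \<le> prod_encode (j, Suc k)" for k
      by (simp add: prod_encode_def)
    have ind: "q (Suc (prod_encode (j, k))) \<le> q 0 - real (Suc k) * \<delta>" for k
    proof (induction k)
      case 0
      have "q (Suc (prod_encode (j, 0))) \<le> q (prod_encode (j, 0)) - \<delta>" by (rule key) simp
      also have "\<dots> \<le> q 0 - \<delta>" using qdec[of 0] by simp
      finally show ?case by simp
    next
      case (Suc k)
      have "q (Suc (prod_encode (j, Suc k))) \<le> q (prod_encode (j, Suc k)) - \<delta>" by (rule key) simp
      also have "\<dots> \<le> q (Suc (prod_encode (j, k))) - \<delta>" using qdec[OF mono_enc[of k]] by simp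
      also have "\<dots> \<le> q 0 - real (Suc k) * \<delta> - \<delta>" using Suc by simp
      finally show ?case by (simp add: algebra_simps)
    qed
    obtain k :: nat where k: "q 0 / \<delta> < real k" using reals_Archimedean2 by blast
    have "q 0 < real k * \<delta>" using k dpos by (simp add: divide_less_eq)
    then have "q 0 - real (Suc k) * \<delta> < 0" using dpos by (simp add: algebra_simps)
    with ind[of k] qge[of "Suc (prod_encode (j, k))"] eps show False by linarith
  qed
  have smallE: "\<exists>N. \<forall>n\<ge>N. inner (S n (d j)) (d j) < \<epsilon>" if "0 < \<epsilon>" for j \<epsilon>
    using small[OF that, of j] decm by (meson le_less_trans)
  have qconv: "(\<lambda>n. inner (S n x) x) \<longlonglongrightarrow> 0" for x
  proof (rule LIMSEQ_I)
    fix e :: real assume e: "0 < e"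
    have "0 < sqrt (e / (8 * M))" using e Mpos by simp
    then obtain j where j: "dist (d j) x < sqrt (e / (8 * M))" using dense by blast
    define w where "w = x - d j"
    have "norm w < sqrt (e / (8 * M))" using j by (simp add: w_def dist_norm norm_minus_commute)
    then have "(norm w)^2 < (sqrt (e / (8 * M)))^2" by (intro power_strict_mono) auto
    then have w2: "(norm w)^2 < e / (8 * M)" using e Mpos by simp
    obtain N where N: "\<forall>n\<ge>N. inner (S n (d j)) (d j) < e / 4" using smallE[of "e / 4" j] e by auto
    show "\<exists>no. \<forall>n\<ge>no. norm (inner (S n x) x - 0) < e"
    proof (intro exI allI impI)
      fix n assume "N \<le> n"
      have "x = d j + w" by (simp add: w_def)
      then have "inner (S n x) x \<le> 2 * inner (S n (d j)) (d j) + 2 * inner (S n w) w"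
        using pos_two[OF Spos[of n], of "d j" w] by simp
      also have "\<dots> < 2 * (e / 4) + 2 * (M * (e / (8 * M)))"
      proof -
        have a: "inner (S n (d j)) (d j) < e / 4" using N \<open>N \<le> n\<close> by simp
        have "M * (norm w)^2 \<le> M * (e / (8 * M))" using w2 Mpos by (intro mult_left_mono) auto
        then have b: "inner (S n w) w \<le> M * (e / (8 * M))" using quadS[of n w] by linarith
        from a b show ?thesis by linarith
      qed
      also have "\<dots> < e" using Mpos e by (simp add: field_simps)
      finally show "norm (inner (S n x) x - 0) < e" using nonneg[of n x] by simp
    qed
  qed
  have Sconv: "(\<lambda>n. S n x) \<longlonglongrightarrow> 0" for x
  proof (rule Lim_null_comparison)
    show "\<forall>\<^sub>F n in sequentially. norm (S n x) \<le> sqrt (M * inner (S n x) x)"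
      by (intro always_eventually allI real_le_rsqrt pos_norm_sq[OF Spos quadS])
    have "(\<lambda>n. sqrt (M * inner (S n x) x)) \<longlonglongrightarrow> sqrt (M * 0)"
      by (intro tendsto_real_sqrt tendsto_mult tendsto_const qconv)
    then show "(\<lambda>n. sqrt (M * inner (S n x) x)) \<longlonglongrightarrow> 0" by simp
  qed
  have sumeq: "(\<Sum>i\<in>UNIV \<inter> {..<n}. Pn i x) = A x - S n x" for n x
  proof (induction n)
    case 0 then show ?case by (simp add: S0)
  next
    case (Suc n)
    have "UNIV \<inter> {..<Suc n} = insert n (UNIV \<inter> {..<n})" by auto
    then show ?case using Suc by (simp add: SSuc blinfun.diff_left)
  qed
  show ?thesis
    unfolding has_projection_decomposition_def
  proof (intro exI conjI ballI allI)
    fix i assume "i \<in> (UNIV :: nat set)"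
    show "projection_op (Pn i)" "J_linear J (Pn i)" using Pgood[of i] by (auto simp: good_def)
  next
    fix x
    have "(\<lambda>n. A x - S n x) \<longlonglongrightarrow> A x - 0" by (intro tendsto_diff tendsto_const Sconv)
    moreover have "(\<Sum>i<n. Pn i x) = A x - S n x" for n using sumeq[where n=n and x=x] by simp
    ultimately show "(\<lambda>n. \<Sum>i\<in>UNIV \<inter> {..<n}. Pn i x) \<longlonglongrightarrow> A x" by simp
  qed
qed



theorem theorem2:
  fixes J A :: "'a::{real_inner, complete_space} \<Rightarrow>\<^sub>L 'a"
  assumes "scalar_structure J"
    and "infinite_dimensional TYPE('a)"
    and "separable_space (euclidean :: 'a topology)"
    and "J_linear J A"
    and "positive_op A"
    and "ess_norm J A > 1"
  shows "has_projection_decomposition J A"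
proof -
  have margin: "ess_norm J A \<le> norm (A - K)" if "compact_op K" "J_linear J K" for K
    unfolding ess_norm_def
  proof (rule cInf_lower)
    show "norm (A - K) \<in> {norm (A - K) |K. compact_op K \<and> J_linear J K}" using that by blast
    show "bdd_below {norm (A - K) |K. compact_op K \<and> J_linear J K}"
      unfolding bdd_below_def by (rule exI[of _ 0]) auto
  qed
  obtain C :: "'a set" where C: "countable C" "closure C = UNIV"
    using assms(3) unfolding separable_space_def by auto
  have Cne: "C \<noteq> {}" using C(2) by auto
  define d where "d = from_nat_into C"
  have rd: "range d = C" using Cne C(1) by (simp add: d_def)
  have dense: "\<exists>j. dist (d j) x < e" if epos: "0 < e" for x e
  proof -
    have "x \<in> closure C" using C(2) by simp
    then obtain y where "y \<in> C" "dist y x < e" using closure_approachable epos by blast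
    then show ?thesis using rd by (metis imageE)
  qed
  show ?thesis
    by (rule main_iter[OF assms(1) assms(4) assms(5) assms(6) margin dense])
qed


end
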